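(* Let $A$ be a hypermatrix of order $n$. Then $A$ is an alternating sign hypermatrix if and only if $\Xi(A)$ is a corner-sum hypermatrix of order $n$ satisfying, for all $i,j,k\in[n]$, $\Xi(A)_{i,j,k}-\Xi(A)_{i-1,j,k}-\Xi(A)_{i,j-1,k}+\Xi(A)_{i-1,j-1,k}\in\{0,1\}$, $\Xi(A)_{i,j,k}-\Xi(A)_{i-1,j,k}-\Xi(A)_{i,j,k-1}+\Xi(A)_{i-1,j,k-1}\in\{0,1\}$, and $\Xi(A)_{i,j,k}-\Xi(A)_{i,j-1,k}-\Xi(A)_{i,j,k-1}+\Xi(A)_{i,j-1,k-1}\in\{0,1\}$.
   Context: Let $[n]=\{1,\dots,n\}$ and $[0,n]=\{0,1,\dots,n\}$. A hypermatrix of order $n$ is an integer array $A=(A_{i,j,k})_{i,j,k\in[n]}$; its lines are the $n$-tuples obtained by fixing two of the three indices (rows, columns, vertical lines). An alternating sign hypermatrix (ASHM) of order $n$ is a hypermatrix with entries in $\{0,1,-1\}$ such that in every line the nonzero entries alternate in sign, beginning and ending with $+1$. For a hypermatrix $A$ of order $n$, $\Xi(A)$ is the array indexed by $[0,n]^3$ with $\Xi(A)_{i,j,k}=\sum_{a=1}^i\sum_{b=1}^j\sum_{c=1}^k A_{a,b,c}$. A corner-sum hypermatrix of order $n$ is an integer array $C$ indexed by $[0,n]^3$ such that for all $i,j\in[0,n]$: $C_{i,j,0}=C_{i,0,j}=C_{0,i,j}=0$, $C_{i,j,n}=C_{i,n,j}=C_{n,i,j}=ij$, and for all $k\in[n]$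 each of $C_{i,j,k}-C_{i,j,k-1}$, $C_{i,k,j}-C_{i,k-1,j}$, $C_{k,i,j}-C_{k-1,i,j}$ is an integer in $\{\max(0,i+j-n),\dots,\min(i,j)\}$. *)

theory Defs
  imports Main
begin

text \<open>A hypermatrix of order n is represented as a function
  nat \<Rightarrow> nat \<Rightarrow> nat \<Rightarrow> int; only the entries with indices in {1..n} matter.\<close>

type_synonym hypermatrix = "nat \<Rightarrow> nat \<Rightarrow> nat \<Rightarrow> int"

definition alt_sign_list :: "int list \<Rightarrow> bool" where
  "alt_sign_list xs \<longleftrightarrow> xs \<noteq> [] \<and> hd xs = 1 \<and> last xs = 1 \<and>
     (\<forall>i. Suc i < length xs \<longrightarrow> xs ! Suc i = - (xs ! i))"

definition alt_sign_line :: "nat \<Rightarrow> (nat \<Rightarrow> int) \<Rightarrow> bool" where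
  "alt_sign_line n f \<longleftrightarrow> (\<forall>a\<in>{1..n}. f a \<in> {0, 1, -1}) \<and>
     alt_sign_list (filter (\<lambda>x. x \<noteq> 0) (map f [1..<n+1]))"

definition is_ASHM :: "nat \<Rightarrow> hypermatrix \<Rightarrow> bool" where
  "is_ASHM n A \<longleftrightarrow>
     (\<forall>j\<in>{1..n}. \<forall>k\<in>{1..n}. alt_sign_line n (\<lambda>i. A i j k)) \<and>
     (\<forall>i\<in>{1..n}. \<forall>k\<in>{1..n}. alt_sign_line n (\<lambda>j. A i j k)) \<and>
     (\<forall>i\<in>{1..n}. \<forall>j\<in>{1..n}. alt_sign_line n (\<lambda>k. A i j k))"

definition Xi :: "hypermatrix \<Rightarrow> hypermatrix" where
  "Xi A i j k = (\<Sum>a=1..i. \<Sum>b=1..j. \<Sum>c=1..k. A a b c)"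

definition corner_sum :: "nat \<Rightarrow> hypermatrix \<Rightarrow> bool" where
  "corner_sum n C \<longleftrightarrow>
     (\<forall>i\<in>{0..n}. \<forall>j\<in>{0..n}.
        C i j 0 = 0 \<and> C i 0 j = 0 \<and> C 0 i j = 0 \<and>
        C i j n = int i * int j \<and> C i n j = int i * int j \<and> C n i j = int i * int j \<and>
        (\<forall>k\<in>{1..n}.
           C i j k - C i j (k-1) \<in> {max 0 (int i + int j - int n) .. min (int i) (int j)} \<and>
           C i k j - C i (k-1) j \<in> {max 0 (int i + int j - int n) .. min (int i) (int j)} \<and>
           C k i j - C (k-1) i j \<in> {max 0 (int i + int j - int n) .. min (int i) (int j)}))"

end

theory Submission
  imports Defs
begin

lemma sum_last': "1 \<le> (i::nat) \<Longrightarrow> (\<Sum>a=1..i. g a) - (\<Sum>a=1..i-1. g a) = (g i :: int)"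
  by (cases i) (auto simp: sum.cl_ivl_Suc)

definition altp :: "int list \<Rightarrow> bool" where
  "altp ys \<longleftrightarrow> (\<forall>i<length ys. ys!i = (-1)^i)"

lemma alt_sign_list_altp: "alt_sign_list ys \<longleftrightarrow> altp ys \<and> odd (length ys)"
proof
  assume h: "alt_sign_list ys"
  hence ne: "ys \<noteq> []" and hd: "ys!0 = 1" and la: "ys!(length ys - 1) = 1"
    and alt: "\<forall>i. Suc i < length ys \<longrightarrow> ys ! Suc i = - (ys ! i)"
    unfolding alt_sign_list_def by (auto simp: hd_conv_nth last_conv_nth)
  have p: "\<forall>i<length ys. ys!i = (-1)^i"
  proof (intro allI impI)
    fix i assume "i < length ys"
    then show "ys!i = (-1)^i"
      by (induction i) (use hd alt in auto)
  qed
  have "(-1::int)^(length ys - 1) = 1" using p la ne by (metis diff_less length_greater_0_conv zero_less_one)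
  hence "even (length ys - 1)" by (simp add: minus_one_power_iff split: if_splits)
  with ne have "odd (length ys)" by (cases "length ys") auto
  with p show "altp ys \<and> odd (length ys)" by (simp add: altp_def)
next
  assume h: "altp ys \<and> odd (length ys)"
  hence ne: "ys \<noteq> []" by auto
  have p: "\<forall>i<length ys. ys!i = (-1)^i" using h by (simp add: altp_def)
  have "hd ys = 1" using p ne by (simp add: hd_conv_nth)
  moreover have "last ys = 1" using p ne h by (simp add: last_conv_nth)
  moreover have "\<forall>i. Suc i < length ys \<longrightarrow> ys ! Suc i = - (ys ! i)" using p by auto
  ultimately show "alt_sign_list ys" using ne by (simp add: alt_sign_list_def)
qed

lemma altp_snoc: "altp (ys @ [x]) \<longleftrightarrow> altp ys \<and> x = (-1)^length ys"
  unfolding altp_def by (auto simp: nth_append less_Suc_eq)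

lemma line_aux:
  fixes f :: "nat \<Rightarrow> int"
  shows "((\<forall>a\<in>{1..n}. f a \<in> {0,1,-1}) \<and> altp (filter (\<lambda>x. x\<noteq>0) (map f [1..<n+1]))
          \<longleftrightarrow> (\<forall>m\<le>n. (\<Sum>a=1..m. f a) \<in> {0,1})) \<and>
         ((\<forall>m\<le>n. (\<Sum>a=1..m. f a) \<in> {0,1}) \<longrightarrow>
           (\<Sum>a=1..n. f a) = (if odd (length (filter (\<lambda>x. x\<noteq>0) (map f [1..<n+1]))) then 1 else 0))"
proof (induction n)
  case 0
  then show ?case by (simp add: altp_def)
next
  case (Suc n)
  define ys where "ys = filter (\<lambda>x. x\<noteq>0) (map f [1..<n+1])"
  define x where "x = f (Suc n)"
  define S where "S = (\<Sum>a=1..n. f a)"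
  have ys': "filter (\<lambda>x. x\<noteq>0) (map f [1..<Suc n+1]) = ys @ (if x \<noteq> 0 then [x] else [])"
    by (simp add: ys_def x_def)
  have S': "(\<Sum>a=1..Suc n. f a) = S + x" by (simp add: S_def x_def)
  have A: "(\<forall>a\<in>{1..Suc n}. f a \<in> {0,1,-1}) \<longleftrightarrow> (\<forall>a\<in>{1..n}. f a \<in> {0,1,-1}) \<and> x \<in> {0,1,-1}"
    by (auto simp: x_def le_Suc_eq)
  have B: "(\<forall>m\<le>Suc n. (\<Sum>a=1..m. f a) \<in> {0,1}) \<longleftrightarrow> (\<forall>m\<le>n. (\<Sum>a=1..m. f a) \<in> {0,1}) \<and> S + x \<in> {0,1}"
    using S' by (auto simp: le_Suc_eq)
  have IH1: "(\<forall>a\<in>{1..n}. f a \<in> {0,1,-1}) \<and> altp ys \<longleftrightarrow> (\<forall>m\<le>n. (\<Sum>a=1..m. f a) \<in> {0,1})"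
    using Suc.IH ys_def by blast
  have IH2: "(\<forall>m\<le>n. (\<Sum>a=1..m. f a) \<in> {0,1}) \<Longrightarrow> S = (if odd (length ys) then 1 else 0)"
    using Suc.IH ys_def S_def by blast
  have L: "altp (ys @ (if x \<noteq> 0 then [x] else [])) \<longleftrightarrow> altp ys \<and> (x \<noteq> 0 \<longrightarrow> x = (-1)^length ys)"
    by (simp add: altp_snoc)
  have len: "length (ys @ (if x \<noteq> 0 then [x] else [])) = length ys + (if x \<noteq> 0 then 1 else 0)"
    by simp
  have key: "\<And>Q. (Q \<Longrightarrow> S = (if odd (length ys) then 1 else 0)) \<Longrightarrow>
     ((Q \<and> x \<in> {0,1,-1} \<and> (x \<noteq> 0 \<longrightarrow> x = (-1)^length ys)) \<longleftrightarrow> Q \<and> S + x \<in> {0,1}) \<and>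
     (Q \<and> S + x \<in> {0,1} \<longrightarrow> S + x = (if odd (length ys + (if x \<noteq> 0 then 1 else 0)) then 1 else 0))"
  proof -
    fix Q assume q: "Q \<Longrightarrow> S = (if odd (length ys) then 1 else 0)"
    show "?thesis Q"
    proof (cases "odd (length ys)")
      case True
      then have "(-1::int)^length ys = -1" by (simp add: minus_one_power_iff)
      then show ?thesis using q True by auto
    next
      case False
      then have "(-1::int)^length ys = 1" by (simp add: minus_one_power_iff)
      then show ?thesis using q False by auto
    qed
  qed
  have K: "(((\<forall>m\<le>n. (\<Sum>a=1..m. f a) \<in> {0,1}) \<and> x \<in> {0,1,-1} \<and> (x \<noteq> 0 \<longrightarrow> x = (-1)^length ys)) \<longleftrightarrow> (\<forall>m\<le>n. (\<Sum>a=1..m. f a) \<in> {0,1}) \<and> S + x \<in> {0,1}) \<and>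
     ((\<forall>m\<le>n. (\<Sum>a=1..m. f a) \<in> {0,1}) \<and> S + x \<in> {0,1} \<longrightarrow> S + x = (if odd (length ys + (if x \<noteq> 0 then 1 else 0)) then 1 else 0))"
    by (rule key[OF IH2])
  have E: "(((\<forall>a\<in>{1..n}. f a \<in> {0,1,-1}) \<and> x \<in> {0,1,-1}) \<and> (altp ys \<and> (x \<noteq> 0 \<longrightarrow> x = (-1)^length ys)))
     = ((\<forall>m\<le>n. (\<Sum>a=1..m. f a) \<in> {0,1}) \<and> x \<in> {0,1,-1} \<and> (x \<noteq> 0 \<longrightarrow> x = (-1)^length ys))"
    using IH1 by blast
  show ?case
    unfolding ys' S' A B L len E by (fact K)
qed

lemma line_iff: "alt_sign_line n f \<longleftrightarrow>
   (\<forall>m\<in>{1..n}. (\<Sum>a=1..m. f a) \<in> {0,1}) \<and> (\<Sum>a=1..n. f a) = 1"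
proof -
  have e: "(\<forall>m\<in>{1..n}. (\<Sum>a=1..m. f a) \<in> {0,1}) \<longleftrightarrow> (\<forall>m\<le>n. (\<Sum>a=1..m. f a) \<in> {0,1})"
  proof
    assume h: "\<forall>m\<in>{1..n}. (\<Sum>a=1..m. f a) \<in> {0,1}"
    show "\<forall>m\<le>n. (\<Sum>a=1..m. f a) \<in> {0,1}"
    proof (intro allI impI)
      fix m assume "m \<le> n"
      then show "(\<Sum>a=1..m. f a) \<in> {0,1}" using h by (cases "m = 0") auto
    qed
  qed auto
  show ?thesis
    unfolding alt_sign_line_def alt_sign_list_altp e
  proof -
    let ?ys = "filter (\<lambda>x. x\<noteq>0) (map f [1..<n+1])"
    let ?P = "\<forall>a\<in>{1..n}. f a \<in> {0,1,-1}"
    let ?Q = "\<forall>m\<le>n. (\<Sum>a=1..m. f a) \<in> {0,1}"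
    have 1: "?P \<and> altp ?ys \<longleftrightarrow> ?Q" and 2: "?Q \<Longrightarrow> (\<Sum>a=1..n. f a) = (if odd (length ?ys) then 1 else 0)"
      using line_aux[of n f] by blast+
    show "(?P \<and> altp ?ys \<and> odd (length ?ys)) = (?Q \<and> (\<Sum>a=1..n. f a) = 1)"
    proof
      assume h: "?P \<and> altp ?ys \<and> odd (length ?ys)"
      then have "?Q" using 1 by blast
      then show "?Q \<and> (\<Sum>a=1..n. f a) = 1" using 2 h by simp
    next
      assume h: "?Q \<and> (\<Sum>a=1..n. f a) = 1"
      then have "odd (length ?ys)" using 2 by (cases "odd (length ?ys)") auto
      then show "?P \<and> altp ?ys \<and> odd (length ?ys)" using 1 h by blast
    qed
  qed
qed


lemma sum01_le:
  assumes "\<forall>a\<in>I. (g a :: int) \<in> {0,1}"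
  shows "0 \<le> sum g I" "sum g I \<le> int (card I)"
proof -
  show "0 \<le> sum g I" using assms by (intro sum_nonneg) auto
  have "sum g I \<le> sum (\<lambda>_. 1) I" using assms by (intro sum_mono) auto
  then show "sum g I \<le> int (card I)" by simp
qed

lemma asm_bound:
  fixes M :: "nat \<Rightarrow> nat \<Rightarrow> int"
  assumes row: "\<forall>a\<in>{1..n}. \<forall>m\<in>{1..n}. (\<Sum>b=1..m. M a b) \<in> {0,1}"
    and rowt: "\<forall>a\<in>{1..n}. (\<Sum>b=1..n. M a b) = 1"
    and col: "\<forall>b\<in>{1..n}. \<forall>m\<in>{1..n}. (\<Sum>a=1..m. M a b) \<in> {0,1}"
    and i: "i \<le> n" and j: "j \<le> n"
  shows "(\<Sum>a=1..i. \<Sum>b=1..j. M a b) \<in> {max 0 (int i + int j - int n) .. min (int i) (int j)}"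
proof -
  have r: "\<forall>a\<in>{1..i}. (\<Sum>b=1..j. M a b) \<in> {0,1}"
  proof
    fix a assume "a \<in> {1..i}"
    then show "(\<Sum>b=1..j. M a b) \<in> {0,1}" using row i j by (cases "j = 0") auto
  qed
  have c: "\<forall>b\<in>{1..j}. (\<Sum>a=1..i. M a b) \<in> {0,1}"
  proof
    fix b assume "b \<in> {1..j}"
    then show "(\<Sum>a=1..i. M a b) \<in> {0,1}" using col i j by (cases "i = 0") auto
  qed
  have c2: "\<forall>b\<in>{Suc j..n}. (\<Sum>a=1..i. M a b) \<in> {0,1}"
  proof
    fix b assume "b \<in> {Suc j..n}"
    then show "(\<Sum>a=1..i. M a b) \<in> {0,1}" using col i j by (cases "i = 0") auto
  qed
  define S where "S = (\<Sum>a=1..i. \<Sum>b=1..j. M a b)"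
  have 1: "0 \<le> S" "S \<le> int i" unfolding S_def using sum01_le[OF r] by auto
  have sw: "S = (\<Sum>b=1..j. \<Sum>a=1..i. M a b)" unfolding S_def by (rule sum.swap)
  have 2: "S \<le> int j" unfolding sw using sum01_le(2)[OF c] by auto
  have split: "\<And>a. (\<Sum>b=1..n. M a b) = (\<Sum>b=1..j. M a b) + (\<Sum>b=Suc j..n. M a b)"
  proof -
    fix a
    have "{1..n} = {1..j} \<union> {Suc j..n}" using j by auto
    then show "(\<Sum>b=1..n. M a b) = (\<Sum>b=1..j. M a b) + (\<Sum>b=Suc j..n. M a b)"
      by (simp add: sum.union_disjoint)
  qed
  have "int i = (\<Sum>a=1..i. (\<Sum>b=1..n. M a b))" using rowt i by simp
  also have "\<dots> = S + (\<Sum>a=1..i. \<Sum>b=Suc j..n. M a b)" unfolding S_def split by (simp add: sum.distrib)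
  also have "(\<Sum>a=1..i. \<Sum>b=Suc j..n. M a b) = (\<Sum>b=Suc j..n. \<Sum>a=1..i. M a b)" by (rule sum.swap)
  finally have e: "int i = S + (\<Sum>b=Suc j..n. \<Sum>a=1..i. M a b)" .
  have "(\<Sum>b=Suc j..n. \<Sum>a=1..i. M a b) \<le> int (n - j)" using sum01_le(2)[OF c2] by simp
  then have 3: "S \<ge> int i + int j - int n" using e j by simp
  show ?thesis using 1 2 3 unfolding S_def by simp
qed

lemma Xi_dk:
  assumes k: "1 \<le> k"
  shows "Xi A i j k - Xi A i j (k-1) = (\<Sum>a=1..i. \<Sum>b=1..j. A a b k)"
proof -
  have h: "\<And>a b. (\<Sum>c=1..k. A a b c) - (\<Sum>c=1..k-1. A a b c) = A a b k"
    using sum_last'[OF k] by blast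
  have "Xi A i j k - Xi A i j (k-1) = (\<Sum>a=1..i. \<Sum>b=1..j. (\<Sum>c=1..k. A a b c) - (\<Sum>c=1..k-1. A a b c))"
    unfolding Xi_def by (simp only: sum_subtractf)
  then show ?thesis by (simp only: h)
qed

lemma Xi_dj:
  assumes j: "1 \<le> j"
  shows "Xi A i j k - Xi A i (j-1) k = (\<Sum>a=1..i. \<Sum>c=1..k. A a j c)"
proof -
  have h: "\<And>a. (\<Sum>b=1..j. \<Sum>c=1..k. A a b c) - (\<Sum>b=1..j-1. \<Sum>c=1..k. A a b c) = (\<Sum>c=1..k. A a j c)"
    using sum_last'[OF j] by blast
  have "Xi A i j k - Xi A i (j-1) k = (\<Sum>a=1..i. (\<Sum>b=1..j. \<Sum>c=1..k. A a b c) - (\<Sum>b=1..j-1. \<Sum>c=1..k. A a b c))"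
    unfolding Xi_def by (simp only: sum_subtractf)
  then show ?thesis by (simp only: h)
qed

lemma Xi_di:
  assumes i: "1 \<le> i"
  shows "Xi A i j k - Xi A (i-1) j k = (\<Sum>b=1..j. \<Sum>c=1..k. A i b c)"
  unfolding Xi_def by (rule sum_last'[OF i])

lemma D1: "1 \<le> i \<Longrightarrow> 1 \<le> j \<Longrightarrow>
  Xi A i j k - Xi A (i-1) j k - Xi A i (j-1) k + Xi A (i-1) (j-1) k = (\<Sum>c=1..k. A i j c)"
proof -
  assume i: "1 \<le> i" and j: "1 \<le> j"
  have "Xi A i j k - Xi A (i-1) j k - Xi A i (j-1) k + Xi A (i-1) (j-1) k
     = (Xi A i j k - Xi A i (j-1) k) - (Xi A (i-1) j k - Xi A (i-1) (j-1) k)" by simp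
  also have "\<dots> = (\<Sum>a=1..i. \<Sum>c=1..k. A a j c) - (\<Sum>a=1..i-1. \<Sum>c=1..k. A a j c)"
    using Xi_dj[OF j] by simp
  also have "\<dots> = (\<Sum>c=1..k. A i j c)" using sum_last'[OF i] by simp
  finally show ?thesis .
qed

lemma D2: "1 \<le> i \<Longrightarrow> 1 \<le> k \<Longrightarrow>
  Xi A i j k - Xi A (i-1) j k - Xi A i j (k-1) + Xi A (i-1) j (k-1) = (\<Sum>b=1..j. A i b k)"
proof -
  assume i: "1 \<le> i" and k: "1 \<le> k"
  have "Xi A i j k - Xi A (i-1) j k - Xi A i j (k-1) + Xi A (i-1) j (k-1)
     = (Xi A i j k - Xi A i j (k-1)) - (Xi A (i-1) j k - Xi A (i-1) j (k-1))" by simp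
  also have "\<dots> = (\<Sum>a=1..i. \<Sum>b=1..j. A a b k) - (\<Sum>a=1..i-1. \<Sum>b=1..j. A a b k)"
    using Xi_dk[OF k] by simp
  also have "\<dots> = (\<Sum>b=1..j. A i b k)" using sum_last'[OF i] by simp
  finally show ?thesis .
qed

lemma D3: "1 \<le> j \<Longrightarrow> 1 \<le> k \<Longrightarrow>
  Xi A i j k - Xi A i (j-1) k - Xi A i j (k-1) + Xi A i (j-1) (k-1) = (\<Sum>a=1..i. A a j k)"
proof -
  assume j: "1 \<le> j" and k: "1 \<le> k"
  have "Xi A i j k - Xi A i (j-1) k - Xi A i j (k-1) + Xi A i (j-1) (k-1)
     = (Xi A i j k - Xi A i j (k-1)) - (Xi A i (j-1) k - Xi A i (j-1) (k-1))" by simp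
  also have "\<dots> = (\<Sum>a=1..i. \<Sum>b=1..j. A a b k) - (\<Sum>a=1..i. \<Sum>b=1..j-1. A a b k)"
    using Xi_dk[OF k] by simp
  also have "\<dots> = (\<Sum>a=1..i. A a j k)" using sum_last'[OF j] by (simp add: sum_subtractf[symmetric])
  finally show ?thesis .
qed


lemma Xi_full_k:
  assumes "\<forall>a\<in>{1..n}. \<forall>b\<in>{1..n}. (\<Sum>c=1..n. A a b c) = 1" "i \<le> n" "j \<le> n"
  shows "Xi A i j n = int i * int j"
proof -
  have "Xi A i j n = (\<Sum>a=1..i. \<Sum>b=1..j. (1::int))"
    unfolding Xi_def using assms by (intro sum.cong refl) auto
  then show ?thesis by simp
qed

lemma Xi_full_j:
  assumes "\<forall>a\<in>{1..n}. \<forall>c\<in>{1..n}. (\<Sum>b=1..n. A a b c) = 1" "i \<le> n" "j \<le> n"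
  shows "Xi A i n j = int i * int j"
proof -
  have "Xi A i n j = (\<Sum>a=1..i. \<Sum>c=1..j. \<Sum>b=1..n. A a b c)"
    unfolding Xi_def by (rule sum.cong[OF refl]) (rule sum.swap)
  also have "\<dots> = (\<Sum>a=1..i. \<Sum>c=1..j. (1::int))"
    using assms by (intro sum.cong refl) auto
  finally show ?thesis by simp
qed

lemma Xi_full_i:
  assumes "\<forall>b\<in>{1..n}. \<forall>c\<in>{1..n}. (\<Sum>a=1..n. A a b c) = 1" "i \<le> n" "j \<le> n"
  shows "Xi A n i j = int i * int j"
proof -
  have "Xi A n i j = (\<Sum>b=1..i. \<Sum>a=1..n. \<Sum>c=1..j. A a b c)"
    unfolding Xi_def by (rule sum.swap)
  also have "\<dots> = (\<Sum>b=1..i. \<Sum>c=1..j. \<Sum>a=1..n. A a b c)"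
    by (rule sum.cong[OF refl]) (rule sum.swap)
  also have "\<dots> = (\<Sum>b=1..i. \<Sum>c=1..j. (1::int))"
    using assms by (intro sum.cong refl) auto
  finally show ?thesis by simp
qed

lemma one_calc: "1 \<le> i \<Longrightarrow> 1 \<le> j \<Longrightarrow>
  int i * int j - int (i-1) * int j - int i * int (j-1) + int (i-1) * int (j-1) = (1::int)"
  by (simp add: of_nat_diff algebra_simps)

theorem mainTheorem4:
  fixes n :: nat and A :: hypermatrix
  shows "is_ASHM n A \<longleftrightarrow>
    (corner_sum n (Xi A) \<and>
     (\<forall>i\<in>{1..n}. \<forall>j\<in>{1..n}. \<forall>k\<in>{1..n}.
        Xi A i j k - Xi A (i-1) j k - Xi A i (j-1) k + Xi A (i-1) (j-1) k \<in> {0, 1} \<and>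
        Xi A i j k - Xi A (i-1) j k - Xi A i j (k-1) + Xi A (i-1) j (k-1) \<in> {0, 1} \<and>
        Xi A i j k - Xi A i (j-1) k - Xi A i j (k-1) + Xi A i (j-1) (k-1) \<in> {0, 1}))"
proof
  assume H: "is_ASHM n A"
  have Li: "\<forall>j\<in>{1..n}. \<forall>k\<in>{1..n}. (\<forall>m\<in>{1..n}. (\<Sum>a=1..m. A a j k) \<in> {0,1}) \<and> (\<Sum>a=1..n. A a j k) = 1"
    using H unfolding is_ASHM_def line_iff by blast
  have Lj: "\<forall>i\<in>{1..n}. \<forall>k\<in>{1..n}. (\<forall>m\<in>{1..n}. (\<Sum>b=1..m. A i b k) \<in> {0,1}) \<and> (\<Sum>b=1..n. A i b k) = 1"
    using H unfolding is_ASHM_def line_iff by blast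
  have Lk: "\<forall>i\<in>{1..n}. \<forall>j\<in>{1..n}. (\<forall>m\<in>{1..n}. (\<Sum>c=1..m. A i j c) \<in> {0,1}) \<and> (\<Sum>c=1..n. A i j c) = 1"
    using H unfolding is_ASHM_def line_iff by blast
  have CS: "corner_sum n (Xi A)"
    unfolding corner_sum_def
  proof (intro ballI conjI)
    fix i j assume i: "i \<in> {0..n}" and j: "j \<in> {0..n}"
    show "Xi A i j 0 = 0" "Xi A i 0 j = 0" "Xi A 0 i j = 0" by (simp_all add: Xi_def)
    have iv0: "i \<le> n" "j \<le> n" using i j by auto
    have Lk': "\<forall>a\<in>{1..n}. \<forall>b\<in>{1..n}. (\<Sum>c=1..n. A a b c) = 1" using Lk by blast
    have Lj': "\<forall>a\<in>{1..n}. \<forall>c\<in>{1..n}. (\<Sum>b=1..n. A a b c) = 1" using Lj by blast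
    have Li': "\<forall>b\<in>{1..n}. \<forall>c\<in>{1..n}. (\<Sum>a=1..n. A a b c) = 1" using Li by blast
    show "Xi A i j n = int i * int j" by (rule Xi_full_k[OF Lk' iv0])
    show "Xi A i n j = int i * int j" by (rule Xi_full_j[OF Lj' iv0])
    show "Xi A n i j = int i * int j" by (rule Xi_full_i[OF Li' iv0])
    fix k assume k: "k \<in> {1..n}"
    have k1: "1 \<le> k" using k by simp
    have iv: "i \<le> n" "j \<le> n" using i j by auto
    show "Xi A i j k - Xi A i j (k-1) \<in> {max 0 (int i + int j - int n) .. min (int i) (int j)}"
      unfolding Xi_dk[OF k1] by (rule asm_bound[OF _ _ _ iv]) (use Lj Li k in auto)
    show "Xi A i k j - Xi A i (k-1) j \<in> {max 0 (int i + int j - int n) .. min (int i) (int j)}"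
      unfolding Xi_dj[OF k1] by (rule asm_bound[OF _ _ _ iv]) (use Lk Li k in auto)
    show "Xi A k i j - Xi A (k-1) i j \<in> {max 0 (int i + int j - int n) .. min (int i) (int j)}"
      unfolding Xi_di[OF k1] by (rule asm_bound[OF _ _ _ iv]) (use Lk Lj k in auto)
  qed
  have R: "\<forall>i\<in>{1..n}. \<forall>j\<in>{1..n}. \<forall>k\<in>{1..n}.
        Xi A i j k - Xi A (i-1) j k - Xi A i (j-1) k + Xi A (i-1) (j-1) k \<in> {0, 1} \<and>
        Xi A i j k - Xi A (i-1) j k - Xi A i j (k-1) + Xi A (i-1) j (k-1) \<in> {0, 1} \<and>
        Xi A i j k - Xi A i (j-1) k - Xi A i j (k-1) + Xi A i (j-1) (k-1) \<in> {0, 1}"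
  proof (intro ballI conjI)
    fix i j k assume i: "i \<in> {1..n}" and j: "j \<in> {1..n}" and k: "k \<in> {1..n}"
    show "Xi A i j k - Xi A (i-1) j k - Xi A i (j-1) k + Xi A (i-1) (j-1) k \<in> {0, 1}"
    proof -
      have "(\<Sum>c=1..k. A i j c) \<in> {0,1}" using Lk i j k by blast
      moreover have "1 \<le> i" "1 \<le> j" using i j by auto
      ultimately show ?thesis using D1[of i j A k] by simp
    qed
    show "Xi A i j k - Xi A (i-1) j k - Xi A i j (k-1) + Xi A (i-1) j (k-1) \<in> {0, 1}"
    proof -
      have "(\<Sum>b=1..j. A i b k) \<in> {0,1}" using Lj i j k by blast
      moreover have "1 \<le> i" "1 \<le> k" using i k by auto
      ultimately show ?thesis using D2[of i k A j] by simp
    qed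
    show "Xi A i j k - Xi A i (j-1) k - Xi A i j (k-1) + Xi A i (j-1) (k-1) \<in> {0, 1}"
    proof -
      have "(\<Sum>a=1..i. A a j k) \<in> {0,1}" using Li i j k by blast
      moreover have "1 \<le> j" "1 \<le> k" using j k by auto
      ultimately show ?thesis using D3[of j k A i] by simp
    qed
  qed
  show "corner_sum n (Xi A) \<and> (\<forall>i\<in>{1..n}. \<forall>j\<in>{1..n}. \<forall>k\<in>{1..n}.
        Xi A i j k - Xi A (i-1) j k - Xi A i (j-1) k + Xi A (i-1) (j-1) k \<in> {0, 1} \<and>
        Xi A i j k - Xi A (i-1) j k - Xi A i j (k-1) + Xi A (i-1) j (k-1) \<in> {0, 1} \<and>
        Xi A i j k - Xi A i (j-1) k - Xi A i j (k-1) + Xi A i (j-1) (k-1) \<in> {0, 1})" using CS R by blast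
next
  assume H: "corner_sum n (Xi A) \<and>
     (\<forall>i\<in>{1..n}. \<forall>j\<in>{1..n}. \<forall>k\<in>{1..n}.
        Xi A i j k - Xi A (i-1) j k - Xi A i (j-1) k + Xi A (i-1) (j-1) k \<in> {0, 1} \<and>
        Xi A i j k - Xi A (i-1) j k - Xi A i j (k-1) + Xi A (i-1) j (k-1) \<in> {0, 1} \<and>
        Xi A i j k - Xi A i (j-1) k - Xi A i j (k-1) + Xi A i (j-1) (k-1) \<in> {0, 1})"
  have F1: "\<And>i j. i \<le> n \<Longrightarrow> j \<le> n \<Longrightarrow> Xi A i j n = int i * int j"
    and F2: "\<And>i j. i \<le> n \<Longrightarrow> j \<le> n \<Longrightarrow> Xi A i n j = int i * int j"
    and F3: "\<And>i j. i \<le> n \<Longrightarrow> j \<le> n \<Longrightarrow> Xi A n i j = int i * int j"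
  proof -
    have CS: "corner_sum n (Xi A)" using H by blast
    fix i j :: nat assume "i \<le> n" "j \<le> n"
    then have "i \<in> {0..n}" "j \<in> {0..n}" by auto
    note c = CS[unfolded corner_sum_def, rule_format, OF this]
    show "Xi A i j n = int i * int j" using c by blast
    show "Xi A i n j = int i * int j" using c by blast
    show "Xi A n i j = int i * int j" using c by blast
  qed
  have P1: "\<And>i j k. i \<in> {1..n} \<Longrightarrow> j \<in> {1..n} \<Longrightarrow> k \<in> {1..n} \<Longrightarrow> (\<Sum>c=1..k. A i j c) \<in> {0,1}"
  proof -
    fix i j k assume i: "i \<in> {1..n}" and j: "j \<in> {1..n}" and k: "k \<in> {1..n}"
    have "Xi A i j k - Xi A (i-1) j k - Xi A i (j-1) k + Xi A (i-1) (j-1) k \<in> {0,1}" using H i j k by blast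
    moreover have "1 \<le> i" "1 \<le> j" "1 \<le> k" using i j k by auto
    ultimately show "(\<Sum>c=1..k. A i j c) \<in> {0,1}" using D1 by simp
  qed
  have P2: "\<And>i j k. i \<in> {1..n} \<Longrightarrow> j \<in> {1..n} \<Longrightarrow> k \<in> {1..n} \<Longrightarrow> (\<Sum>b=1..j. A i b k) \<in> {0,1}"
  proof -
    fix i j k assume i: "i \<in> {1..n}" and j: "j \<in> {1..n}" and k: "k \<in> {1..n}"
    have "Xi A i j k - Xi A (i-1) j k - Xi A i j (k-1) + Xi A (i-1) j (k-1) \<in> {0,1}" using H i j k by blast
    moreover have "1 \<le> i" "1 \<le> j" "1 \<le> k" using i j k by auto
    ultimately show "(\<Sum>b=1..j. A i b k) \<in> {0,1}" using D2 by simp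
  qed
  have P3: "\<And>i j k. i \<in> {1..n} \<Longrightarrow> j \<in> {1..n} \<Longrightarrow> k \<in> {1..n} \<Longrightarrow> (\<Sum>a=1..i. A a j k) \<in> {0,1}"
  proof -
    fix i j k assume i: "i \<in> {1..n}" and j: "j \<in> {1..n}" and k: "k \<in> {1..n}"
    have "Xi A i j k - Xi A i (j-1) k - Xi A i j (k-1) + Xi A i (j-1) (k-1) \<in> {0,1}" using H i j k by blast
    moreover have "1 \<le> i" "1 \<le> j" "1 \<le> k" using i j k by auto
    ultimately show "(\<Sum>a=1..i. A a j k) \<in> {0,1}" using D3 by simp
  qed
  show "is_ASHM n A"
    unfolding is_ASHM_def line_iff
  proof (intro conjI ballI)
    fix j k assume j: "j \<in> {1..n}" and k: "k \<in> {1..n}"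
    show "\<And>m. m \<in> {1..n} \<Longrightarrow> (\<Sum>a=1..m. A a j k) \<in> {0,1}" using P3 j k by blast
    have "(\<Sum>a=1..n. A a j k) = Xi A n j k - Xi A n (j-1) k - Xi A n j (k-1) + Xi A n (j-1) (k-1)"
      using D3[of j k A n] j k by simp
    also have "\<dots> = 1" proof -
      have le: "j \<le> n" "k \<le> n" "j-1 \<le> n" "k-1 \<le> n" "1 \<le> j" "1 \<le> k" using j k by auto
      show ?thesis using F3[OF le(1) le(2)] F3[OF le(3) le(2)] F3[OF le(1) le(4)] F3[OF le(3) le(4)] one_calc[OF le(5) le(6)] by simp
    qed
    finally show "(\<Sum>a=1..n. A a j k) = 1" .
  next
    fix i k assume i: "i \<in> {1..n}" and k: "k \<in> {1..n}"
    show "\<And>m. m \<in> {1..n} \<Longrightarrow> (\<Sum>b=1..m. A i b k) \<in> {0,1}" using P2 i k by blast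
    have "(\<Sum>b=1..n. A i b k) = Xi A i n k - Xi A (i-1) n k - Xi A i n (k-1) + Xi A (i-1) n (k-1)"
      using D2[of i k A n] i k by simp
    also have "\<dots> = 1" proof -
      have le: "i \<le> n" "k \<le> n" "i-1 \<le> n" "k-1 \<le> n" "1 \<le> i" "1 \<le> k" using i k by auto
      show ?thesis using F2[OF le(1) le(2)] F2[OF le(3) le(2)] F2[OF le(1) le(4)] F2[OF le(3) le(4)] one_calc[OF le(5) le(6)] by simp
    qed
    finally show "(\<Sum>b=1..n. A i b k) = 1" .
  next
    fix i j assume i: "i \<in> {1..n}" and j: "j \<in> {1..n}"
    show "\<And>m. m \<in> {1..n} \<Longrightarrow> (\<Sum>c=1..m. A i j c) \<in> {0,1}" using P1 i j by blast
    have "(\<Sum>c=1..n. A i j c) = Xi A i j n - Xi A (i-1) j n - Xi A i (j-1) n + Xi A (i-1) (j-1) n"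
      using D1[of i j A n] i j by simp
    also have "\<dots> = 1" proof -
      have le: "i \<le> n" "j \<le> n" "i-1 \<le> n" "j-1 \<le> n" "1 \<le> i" "1 \<le> j" using i j by auto
      show ?thesis using F1[OF le(1) le(2)] F1[OF le(3) le(2)] F1[OF le(1) le(4)] F1[OF le(3) le(4)] one_calc[OF le(5) le(6)] by simp
    qed
    finally show "(\<Sum>c=1..n. A i j c) = 1" .
  qed
qed

end
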